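(* Let $d\in\mathbb{N}$ and $\xi=(\xi^0,\xi^1,\dots,\xi^d)\in\mathbb{C}^{d+1}$ with $\xi^j\neq\xi^k$ for $j\neq k$. Let $p:\mathbb{C}\to\mathbb{C}$ be a polynomial of degree $d$. Then \[ \|p\|_{T([-1,1])}=\sum_{j=0}^d\Big|\sum_{k=0}^dT(\xi)^j{}_k\,p(\xi^k)\Big|. \]
   Context: $T_m$ is the Chebyshev polynomial with $T_m(\cos z)=\cos(mz)$. For a nonzero polynomial $p$ of one variable, writing uniquely $p(x)=\sum_{j=0}^{\deg p}c_jT_j(x)$, $\|p\|_{T([-1,1])}:=\sum_{j=0}^{\deg p}|c_j|$. For $j,k\in\mathbb{N}_0$: $C^j{}_k:=0$ if $j>k$; for $j\le k$: $C^j{}_k:=2^{1-k}\binom{k}{\frac{k-1}{2}-\frac{j-1}{2}}$ if $k,j$ odd; $C^0{}_k:=2^{-k}\binom{k}{k/2}$ if $k$ even; $C^j{}_k:=2^{1-k}\binom{k}{\frac k2-\frac j2}$ if $k,j$ even and $j\ge2$; $C^j{}_k:=0$ otherwise. For $n\in\mathbb{N}$, $\eta=(\eta^1,\dots,\eta^n)\in\mathbb{C}^n$, $j\in\{0,\dots,n\}$, $k\in\{0,\dots,j\}$, define recursively $a_{j,0}(\eta):=\prod_{\ell=1}^j\eta^\ell$, $a_{j,k}(\eta):=a_{j-1,k-1}(\eta)+\eta^ja_{j-1,k}(\eta)$ for $1\le k\le j-1$, $a_{j,j}(\eta):=1$. For $k\in\{0,\dots,d\}$, let $\xi_{(k)}\in\mathbb{C}^d$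 be the vector obtained from $\xi$ by deleting the entry $\xi^k$ (remaining entries in their original order). Set $L(\xi)^j{}_k:=\frac{a_{d,j}(-\xi_{(k)})}{\prod_{\ell\in\{0,\dots,d\}\setminus\{k\}}(\xi^k-\xi^\ell)}$ and $T(\xi)^j{}_k:=\sum_{\ell=0}^dC^j{}_\ell L(\xi)^\ell{}_k$ for $j,k\in\{0,\dots,d\}$. *)

theory Defs
  imports "HOL-Analysis.Analysis" "HOL-Computational_Algebra.Polynomial"
begin

fun cheb :: "nat \<Rightarrow> complex poly" where
  "cheb 0 = 1"
| "cheb (Suc 0) = [:0, 1:]"
| "cheb (Suc (Suc n)) = [:0, 2:] * cheb (Suc n) - cheb n"

text \<open>Sanity check: this is the polynomial with T_m(cos z) = cos(m z).\<close>
lemma cheb_cos: "poly (cheb m) (cos z) = cos (of_nat m * z)"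
proof (induction m rule: cheb.induct)
  case 1 then show ?case by simp
next
  case 2 then show ?case by simp
next
  case (3 n)
  have "cos (of_nat (Suc (Suc n)) * z) = cos ((of_nat (Suc n)) * z + z)"
    by (simp add: algebra_simps)
  also have "\<dots> = 2 * cos z * cos (of_nat (Suc n) * z) - cos (of_nat n * z)"
    using cos_add[of "of_nat (Suc n) * z" z] cos_diff[of "of_nat (Suc n) * z" z]
    by (simp add: algebra_simps)
  finally show ?case using 3 by simp
qed

definition cheb_coeffs :: "complex poly \<Rightarrow> nat \<Rightarrow> complex" where
  "cheb_coeffs p = (THE c. (\<forall>j>degree p. c j = 0) \<and>
       p = (\<Sum>j\<le>degree p. smult (c j) (cheb j)))"

definition cheb_norm :: "complex poly \<Rightarrow> real" where
  "cheb_norm p = (\<Sum>j\<le>degree p. cmod (cheb_coeffs p j))"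

definition Ccoef :: "nat \<Rightarrow> nat \<Rightarrow> real" where
  "Ccoef j k =
    (if j > k then 0
     else if odd k \<and> odd j then 2 / 2 ^ k * real (k choose ((k - 1) div 2 - (j - 1) div 2))
     else if even k \<and> j = 0 then 1 / 2 ^ k * real (k choose (k div 2))
     else if even k \<and> even j \<and> j \<ge> 2 then 2 / 2 ^ k * real (k choose (k div 2 - j div 2))
     else 0)"

text \<open>a_{j,k}(eta), with eta = (eta^1,...,eta^n) given as a function on indices 1..n.\<close>
fun acoef :: "(nat \<Rightarrow> complex) \<Rightarrow> nat \<Rightarrow> nat \<Rightarrow> complex" where
  "acoef \<eta> 0 k = (if k = 0 then 1 else 0)"
| "acoef \<eta> (Suc j) k =
     (if k = 0 then (\<Prod>l\<in>{1..Suc j}. \<eta> l)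
      else if k = Suc j then 1
      else if k < Suc j then acoef \<eta> j (k - 1) + \<eta> (Suc j) * acoef \<eta> j k
      else 0)"

text \<open>xi_(k): delete entry xi^k from (xi^0,...,xi^d); result indexed 1..d.\<close>
definition delete_entry :: "(nat \<Rightarrow> complex) \<Rightarrow> nat \<Rightarrow> nat \<Rightarrow> complex" where
  "delete_entry \<xi> k l = (if l \<le> k then \<xi> (l - 1) else \<xi> l)"

definition Lmat :: "nat \<Rightarrow> (nat \<Rightarrow> complex) \<Rightarrow> nat \<Rightarrow> nat \<Rightarrow> complex" where
  "Lmat d \<xi> j k = acoef (\<lambda>l. - delete_entry \<xi> k l) d j /
       (\<Prod>l\<in>{0..d} - {k}. (\<xi> k - \<xi> l))"

definition Tmat :: "nat \<Rightarrow> (nat \<Rightarrow> complex) \<Rightarrow> nat \<Rightarrow> nat \<Rightarrow> complex" where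
  "Tmat d \<xi> j k = (\<Sum>l=0..d. complex_of_real (Ccoef j l) * Lmat d \<xi> l k)"

end

theory Submission
  imports Defs
begin


lemma cheb_deg_coeff: "degree (cheb n) \<le> n \<and> coeff (cheb n) n = (if n = 0 then 1 else 2^(n-1))"
proof (induction n rule: cheb.induct)
  case 1 then show ?case by simp
next
  case 2 then show ?case by simp
next
  case (3 n)
  have d1: "degree ([:0, 2:] * cheb (Suc n)) \<le> Suc (Suc n)"
    using 3 degree_mult_le[of "[:0, 2:]" "cheb (Suc n)"] by simp
  have d2: "degree (cheb n) \<le> Suc (Suc n)" using 3 by simp
  have "degree (cheb (Suc (Suc n))) \<le> Suc (Suc n)"
    using degree_diff_le[OF d1 d2] by simp
  moreover have "coeff (cheb n) (Suc (Suc n)) = 0"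
    using 3 by (intro coeff_eq_0) simp
  moreover have "coeff ([:0, 2:] * cheb (Suc n)) (Suc (Suc n)) = 2 * coeff (cheb (Suc n)) (Suc n)"
    by (simp add: mult_pCons_left coeff_pCons)
  ultimately show ?case using 3 by simp
qed

lemma cheb_degree_le: "degree (cheb n) \<le> n" using cheb_deg_coeff by blast

lemma cheb_lead_nz: "coeff (cheb n) n \<noteq> 0" using cheb_deg_coeff[of n] by simp

lemma cheb_indep: "(\<Sum>j\<le>n. smult (c j) (cheb j)) = 0 \<Longrightarrow> j \<le> n \<Longrightarrow> c j = 0"
proof (induction n arbitrary: j)
  case 0 then show ?case using cheb_lead_nz[of 0] by simp
next
  case (Suc n)
  have "coeff (\<Sum>j\<le>Suc n. smult (c j) (cheb j)) (Suc n) = c (Suc n) * coeff (cheb (Suc n)) (Suc n)"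
  proof -
    have "\<And>j. j \<le> n \<Longrightarrow> coeff (cheb j) (Suc n) = 0"
      by (rule coeff_eq_0) (meson cheb_degree_le le_imp_less_Suc order.strict_trans1)
    then show ?thesis by (simp add: coeff_sum)
  qed
  then have "c (Suc n) * coeff (cheb (Suc n)) (Suc n) = 0" using Suc.prems(1) by (metis coeff_0)
  then have cS: "c (Suc n) = 0" using cheb_lead_nz[of "Suc n"] by simp
  then have "(\<Sum>j\<le>n. smult (c j) (cheb j)) = 0" using Suc.prems(1) by simp
  then show ?case using Suc cS by (cases "j = Suc n") auto
qed

lemma cheb_coeffs_eq:
  assumes "\<forall>j>degree p. c j = 0" "p = (\<Sum>j\<le>degree p. smult (c j) (cheb j))"
  shows "cheb_coeffs p = c"
  unfolding cheb_coeffs_def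
proof (rule the_equality)
  show "(\<forall>j>degree p. c j = 0) \<and> p = (\<Sum>j\<le>degree p. smult (c j) (cheb j))" using assms by blast
next
  fix c' assume h: "(\<forall>j>degree p. c' j = 0) \<and> p = (\<Sum>j\<le>degree p. smult (c' j) (cheb j))"
  have "(\<Sum>j\<le>degree p. smult (c' j - c j) (cheb j)) = 0"
    using h assms by (simp add: smult_diff_left sum_subtractf)
  then have "\<And>j. j \<le> degree p \<Longrightarrow> c' j - c j = 0" by (rule cheb_indep)
  then show "c' = c" using h assms by (metis eq_iff_diff_eq_0 ext not_le)
qed

lemma acoef_eq: "acoef \<eta> n k = coeff (\<Prod>l\<in>{1..n}. [:\<eta> l, 1:]) k"
proof (induction n arbitrary: k)
  case 0 then show ?case by (simp add: coeff_1)
next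
  case (Suc n)
  have P: "(\<Prod>l\<in>{1..Suc n}. [:\<eta> l, 1:]) = [:\<eta> (Suc n), 1:] * (\<Prod>l\<in>{1..n}. [:\<eta> l, 1:])"
    by (simp add: prod.nat_ivl_Suc' mult.commute)
  have dg: "degree (\<Prod>l\<in>{1..n}. [:\<eta> l, 1:]) \<le> n"
    using degree_prod_sum_le[of "{1..n}" "\<lambda>l. [:\<eta> l, 1:]"] by simp
  have c0: "coeff (\<Prod>l\<in>{1..m}. [:\<eta> l, 1:]) 0 = (\<Prod>l\<in>{1..m}. \<eta> l)" for m
    by (simp add: poly_0_coeff_0[symmetric] poly_prod)
  show ?case
  proof (cases "k = 0")
    case True then show ?thesis using c0 by simp
  next
    case False
    then obtain k' where k': "k = Suc k'" by (cases k) auto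
    have "coeff (\<Prod>l\<in>{1..Suc n}. [:\<eta> l, 1:]) k
        = \<eta> (Suc n) * coeff (\<Prod>l\<in>{1..n}. [:\<eta> l, 1:]) k + coeff (\<Prod>l\<in>{1..n}. [:\<eta> l, 1:]) k'"
      unfolding P k' by (simp add: mult_pCons_left coeff_pCons)
    moreover have "k > n \<Longrightarrow> coeff (\<Prod>l\<in>{1..n}. [:\<eta> l, 1:]) k = 0"
      using dg by (intro coeff_eq_0) simp
    moreover have "k > Suc n \<Longrightarrow> coeff (\<Prod>l\<in>{1..n}. [:\<eta> l, 1:]) k' = 0"
      using dg k' by (intro coeff_eq_0) simp
    moreover have "coeff (\<Prod>l\<in>{1..n}. [:\<eta> l, 1:]) n = 1"
    proof -
      have "lead_coeff (\<Prod>l\<in>{1..n}. [:\<eta> l, 1:]) = 1"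
        by (simp add: lead_coeff_prod)
      moreover have "degree (\<Prod>l\<in>{1..n}. [:\<eta> l, 1:]) = n"
        by (simp add: degree_prod_eq_sum_degree)
      ultimately show ?thesis by simp
    qed
    ultimately show ?thesis using Suc False k' by (auto simp: add.commute)
  qed
qed



definition Dc :: "nat \<Rightarrow> nat \<Rightarrow> complex" where
  "Dc j l = (if j \<le> l \<and> even (l - j) then (if j = 0 then 1 else 2) / 2^l * of_nat (l choose ((l - j) div 2)) else 0)"

lemma Ccoef_Dc: "complex_of_real (Ccoef j l) = Dc j l"
proof -
  have "Ccoef j l = (if j \<le> l \<and> even (l - j) then (if j = 0 then 1 else 2) / 2^l * real (l choose ((l - j) div 2)) else 0)"
    unfolding Ccoef_def
    by (auto elim!: oddE evenE simp: not_less diff_mult_distrib2[symmetric]; simp add: not_le)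
  then show ?thesis unfolding Dc_def by (cases "j \<le> l \<and> even (l - j)") auto
qed

lemma Dc_gt: "j > l \<Longrightarrow> Dc j l = 0" by (simp add: Dc_def)

lemma Dc_rec: "Dc m (Suc l) = ((if m = 0 then 0 else Dc (m - 1) l)
   + (if m = 0 then Dc 1 l else if m = 1 then Dc 0 l + Dc 2 l else Dc (m + 1) l)) / 2"
proof (cases "m \<le> Suc l \<and> even (Suc l - m)")
  case False
  have z0: "Dc (m - 1) l = 0" if "m \<noteq> 0" using False that unfolding Dc_def by (auto; presburger)
  have z1: "Dc 1 l = 0" if "m = 0" using False that unfolding Dc_def by (auto; presburger)
  have z2: "Dc 0 l = 0 \<and> Dc 2 l = 0" if "m = 1" using False that unfolding Dc_def by (auto; presburger)
  have z3: "Dc (m + 1) l = 0" if "m \<ge> 2" using False that unfolding Dc_def by (auto; presburger)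
  have z4: "Dc m (Suc l) = 0" using False unfolding Dc_def by auto
  show ?thesis using z0 z1 z2 z3 z4 by (cases "m = 0"; cases "m = 1"; simp)
next
  case True
  then obtain r where r: "Suc l = m + 2 * r" by (metis evenE le_add_diff_inverse)
  show ?thesis
  proof (cases "m = 0")
    case True
    then obtain r' where r': "r = Suc r'" using r by (cases r) auto
    have l: "l = 2 * r' + 1" using r r' True by simp
    have sym: "(Suc (2 * r') choose Suc r') = (Suc (2*r') choose r')"
      using binomial_symmetric[of r' "Suc (2*r')"] by simp
    show ?thesis using True l sym unfolding Dc_def
      by (simp add: field_simps)
  next
    case m0: False
    show ?thesis
    proof (cases "m = 1")
      case True
      then have l: "l = 2 * r" using r by simp
      show ?thesis
      proof (cases r)
        case 0 then show ?thesis using l True unfolding Dc_def by simp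
      next
        case (Suc r')
        then show ?thesis using l True unfolding Dc_def
          by (simp add: field_simps)
      qed
    next
      case False
      then obtain m' where m': "m = Suc (Suc m')" using m0 by (cases m; cases "m - 1") auto
      show ?thesis
      proof (cases r)
        case 0 then show ?thesis using r m' unfolding Dc_def by simp
      next
        case (Suc r')
        then have l: "l = m' + 2 * r' + 3" using r m' by simp
        define N where "N = m' + 2 * r' + 3"
        have lN: "l = N" using l N_def by simp
        have a1: "Dc m (Suc l) = 2 / 2 ^ Suc N * of_nat (Suc N choose Suc r')"
          unfolding Dc_def lN m' N_def by simp
        have a2: "Dc (m - 1) l = 2 / 2 ^ N * of_nat (N choose Suc r')"
          unfolding Dc_def lN m' N_def by simp
        have a3: "Dc (m + 1) l = 2 / 2 ^ N * of_nat (N choose r')"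
          unfolding Dc_def lN m' N_def by simp
        have pas: "Suc N choose Suc r' = (N choose r') + (N choose Suc r')" by simp
        show ?thesis unfolding a1 a2 a3 pas using m0 False by (simp add: field_simps)
      qed
    qed
  qed
qed



lemma smult_sum_right: "smult c (sum f A) = sum (\<lambda>i. smult c (f i)) A"
  by (induct A rule: infinite_finite_induct) (auto simp: smult_add_right)

lemma xcheb: "[:0,1:] * cheb j = smult (1/2) (cheb (Suc j)) + smult (1/2) (cheb (if j = 0 then 1 else j - 1))"
proof (cases j)
  case 0 then show ?thesis by (simp flip: smult_add_left)
next
  case (Suc m)
  have "cheb (Suc (Suc m)) + cheb m = [:0, 2:] * cheb (Suc m)" by simp
  also have "[:0, 2:] = smult (2::complex) [:0, 1:]" by simp
  finally have "smult (1/2) (cheb (Suc (Suc m)) + cheb m) = [:0,1:] * cheb (Suc m)"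
    by simp
  then show ?thesis using Suc by (simp del: cheb.simps add: smult_add_right)
qed

lemma monom_cheb: "monom (1::complex) l = (\<Sum>j\<le>l. smult (Dc j l) (cheb j))"
proof (induction l)
  case 0 then show ?case by (simp add: Dc_def)
next
  case (Suc l)
  define f where "f j = (if j = 0 then 1 else j - 1)" for j :: nat
  have "monom (1::complex) (Suc l) = [:0,1:] * monom 1 l" by (simp add: monom_Suc)
  also have "\<dots> = (\<Sum>j\<le>l. smult (Dc j l) ([:0,1:] * cheb j))"
    unfolding Suc by (simp add: sum_distrib_left mult_smult_right)
  also have "\<dots> = smult (1/2) (\<Sum>j\<le>l. smult (Dc j l) (cheb (Suc j)))
                 + smult (1/2) (\<Sum>j\<le>l. smult (Dc j l) (cheb (f j)))"
    unfolding xcheb f_def by (simp add: smult_sum_right smult_add_right sum.distrib)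
  finally have L: "monom 1 (Suc l) = \<dots>" .
  define A where "A m = (if m = 0 then 0 else Dc (m - 1) l)" for m
  define B where "B m = (if m = 0 then Dc 1 l else if m = 1 then Dc 0 l + Dc 2 l else Dc (m + 1) l)" for m
  have R: "(\<Sum>m\<le>Suc l. smult (Dc m (Suc l)) (cheb m)) =
      smult (1/2) (\<Sum>m\<le>Suc l. smult (A m) (cheb m)) + smult (1/2) (\<Sum>m\<le>Suc l. smult (B m) (cheb m))"
    unfolding Dc_rec[of _ l] A_def[symmetric] B_def[symmetric]
    by (simp add: smult_sum_right add_divide_distrib smult_add_left sum.distrib del: sum.atMost_Suc)
  have SA: "(\<Sum>m\<le>Suc l. smult (A m) (cheb m)) = (\<Sum>j\<le>l. smult (Dc j l) (cheb (Suc j)))"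
    by (subst sum.atMost_Suc_shift) (simp add: A_def)
  have B_eq: "B m = (if m = 1 then Dc 0 l else 0) + Dc (Suc m) l" for m
    unfolding B_def by (simp add: numeral_2_eq_2)
  have SB1: "(\<Sum>m\<le>Suc l. smult (if m = 1 then Dc 0 l else 0) (cheb m)) = smult (Dc 0 l) (cheb 1)"
    by (simp add: if_distrib[of "\<lambda>c. smult c _"] sum.delta cong: if_cong)
  have SB2: "(\<Sum>m\<le>Suc l. smult (Dc (Suc m) l) (cheb m)) = (\<Sum>m\<le>l. smult (Dc (Suc m) l) (cheb m))"
    by (simp add: Dc_gt)
  have SF: "(\<Sum>j\<le>l. smult (Dc j l) (cheb (f j))) = smult (Dc 0 l) (cheb 1) + (\<Sum>m\<le>l. smult (Dc (Suc m) l) (cheb m))"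
  proof -
    have "(\<Sum>j\<le>l. smult (Dc j l) (cheb (f j))) = (\<Sum>j\<le>Suc l. smult (Dc j l) (cheb (f j)))"
      by (simp add: Dc_gt)
    also have "\<dots> = smult (Dc 0 l) (cheb 1) + (\<Sum>m\<le>l. smult (Dc (Suc m) l) (cheb m))"
      by (subst sum.atMost_Suc_shift) (simp add: f_def)
    finally show ?thesis .
  qed
  have SB: "(\<Sum>m\<le>Suc l. smult (B m) (cheb m)) = (\<Sum>j\<le>l. smult (Dc j l) (cheb (f j)))"
    unfolding B_eq smult_add_left sum.distrib SB1 SB2 SF ..
  show ?case unfolding L R SA SB ..
qed



lemma delete_prod:
  assumes "k \<le> d"
  shows "(\<Prod>l\<in>{1..d}. [:- delete_entry \<xi> k l, 1:]) = (\<Prod>l\<in>{0..d} - {k}. [:- \<xi> l, 1:])"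
proof -
  define h where "h l = (if l \<le> k then l - 1 else l)" for l :: nat
  have "bij_betw h {1..d} ({0..d} - {k})"
  proof (rule bij_betw_imageI)
    show "inj_on h {1..d}" unfolding inj_on_def h_def by auto
    show "h ` {1..d} = {0..d} - {k}"
    proof
      show "h ` {1..d} \<subseteq> {0..d} - {k}" unfolding h_def using assms by auto
      show "{0..d} - {k} \<subseteq> h ` {1..d}"
      proof
        fix m assume m: "m \<in> {0..d} - {k}"
        show "m \<in> h ` {1..d}"
        proof (cases "m < k")
          case True then have "h (Suc m) = m" unfolding h_def by simp
          moreover have "Suc m \<in> {1..d}" using True assms by simp
          ultimately show ?thesis by force
        next
          case False then have "h m = m" "m \<in> {1..d}" using m unfolding h_def by auto
          then show ?thesis by force
        qed
      qed
    qed
  qed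
  then have "(\<Prod>l\<in>{1..d}. [:- \<xi> (h l), 1:]) = (\<Prod>l\<in>{0..d} - {k}. [:- \<xi> l, 1:])"
    by (rule prod.reindex_bij_betw)
  moreover have "delete_entry \<xi> k l = \<xi> (h l)" for l unfolding delete_entry_def h_def by simp
  ultimately show ?thesis by simp
qed

theorem lemma5p16:
  fixes d :: nat and \<xi> :: "nat \<Rightarrow> complex" and p :: "complex poly"
  assumes "d \<ge> 1"
    and dist: "\<And>j k. j \<le> d \<Longrightarrow> k \<le> d \<Longrightarrow> j \<noteq> k \<Longrightarrow> \<xi> j \<noteq> \<xi> k"
    and deg: "degree p = d"
  shows "cheb_norm p = (\<Sum>j=0..d. cmod (\<Sum>k=0..d. Tmat d \<xi> j k * poly p (\<xi> k)))"
proof -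
  define P where "P k = (\<Prod>l\<in>{0..d} - {k}. [:- \<xi> l, 1:])" for k
  define den where "den k = (\<Prod>l\<in>{0..d} - {k}. (\<xi> k - \<xi> l))" for k
  have L: "Lmat d \<xi> j k = coeff (P k) j / den k" if "k \<le> d" for j k
    unfolding Lmat_def acoef_eq P_def den_def using delete_prod[OF that, of \<xi>] by simp
  have den_nz: "den k \<noteq> 0" if "k \<le> d" for k
    unfolding den_def using dist that by (auto simp: prod_zero_iff)
  have degP: "degree (P k) \<le> d" if "k \<le> d" for k
  proof -
    have "degree (P k) \<le> sum (degree \<circ> (\<lambda>l. [:- \<xi> l, 1:])) ({0..d} - {k})"
      unfolding P_def by (rule degree_prod_sum_le) simp
    also have "\<dots> = card ({0..d} - {k})" by simp
    also have "\<dots> = d" using that by simp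
    finally show ?thesis .
  qed
  have polyP: "poly (P k) (\<xi> i) = (if i = k then den k else 0)" if "k \<le> d" "i \<le> d" for i k
    unfolding P_def den_def poly_prod using that by (auto simp: prod_zero_iff)
  define q where "q = (\<Sum>k\<le>d. smult (poly p (\<xi> k) / den k) (P k))"
  have pq: "p = q"
  proof (rule poly_eqI_degree[where A = "\<xi> ` {..d}"])
    fix x assume "x \<in> \<xi> ` {..d}"
    then obtain i where i: "i \<le> d" "x = \<xi> i" by auto
    have "poly q x = (\<Sum>k\<le>d. poly p (\<xi> k) / den k * (if i = k then den k else 0))"
      unfolding q_def poly_sum i using polyP i by simp
    also have "\<dots> = (\<Sum>k\<le>d. if k = i then poly p (\<xi> i) else 0)"
      by (rule sum.cong[OF refl]) (use den_nz i in auto)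
    also have "\<dots> = poly p x" using i by simp
    finally show "poly p x = poly q x" by simp
  next
    have "inj_on \<xi> {..d}" using dist by (auto simp: inj_on_def)
    then have c: "card (\<xi> ` {..d}) = Suc d" by (simp add: card_image)
    then show "degree p < card (\<xi> ` {..d})" using deg by simp
    have "degree (smult (poly p (\<xi> k) / den k) (P k)) \<le> d" if "k \<in> {..d}" for k
    proof -
      have "degree (P k) \<le> d" using degP that by simp
      then show ?thesis by (meson degree_smult_le order_trans)
    qed
    then have "degree q \<le> d" unfolding q_def
      by (intro degree_sum_le) auto
    then show "degree q < card (\<xi> ` {..d})" using c by simp
  qed
  have coeffp: "coeff p l = (\<Sum>k\<le>d. Lmat d \<xi> l k * poly p (\<xi> k))" for l
  proof -
    have "coeff p l = coeff q l" using pq by simp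
    also have "\<dots> = (\<Sum>k\<le>d. poly p (\<xi> k) / den k * coeff (P k) l)"
      unfolding q_def coeff_sum by simp
    also have "\<dots> = (\<Sum>k\<le>d. Lmat d \<xi> l k * poly p (\<xi> k))"
      by (intro sum.cong refl) (auto simp: L)
    finally show ?thesis .
  qed
  define b where "b j = (\<Sum>k\<le>d. Tmat d \<xi> j k * poly p (\<xi> k))" for j
  have b_eq: "b j = (\<Sum>l\<le>d. Dc j l * coeff p l)" for j
  proof -
    have "(\<Sum>l\<le>d. Dc j l * coeff p l) = (\<Sum>l\<le>d. \<Sum>k\<le>d. Dc j l * Lmat d \<xi> l k * poly p (\<xi> k))"
      unfolding coeffp by (simp add: sum_distrib_left mult.assoc)
    also have "\<dots> = (\<Sum>k\<le>d. \<Sum>l\<le>d. Dc j l * Lmat d \<xi> l k * poly p (\<xi> k))"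
      by (rule sum.swap)
    also have "\<dots> = b j"
      unfolding b_def Tmat_def atLeast0AtMost Ccoef_Dc by (simp add: sum_distrib_right)
    finally show ?thesis by simp
  qed
  define c where "c j = (if j \<le> d then b j else 0)" for j
  have rep: "p = (\<Sum>j\<le>d. smult (c j) (cheb j))"
  proof -
    have "p = (\<Sum>l\<le>d. monom (coeff p l) l)" using poly_as_sum_of_monoms[of p] deg by simp
    also have "\<dots> = (\<Sum>l\<le>d. smult (coeff p l) (monom 1 l))" by (simp add: smult_monom)
    also have "\<dots> = (\<Sum>l\<le>d. \<Sum>j\<le>d. smult (Dc j l * coeff p l) (cheb j))"
    proof (rule sum.cong[OF refl])
      fix l assume l: "l \<in> {..d}"
      have "smult (coeff p l) (monom 1 l) = (\<Sum>j\<le>l. smult (Dc j l * coeff p l) (cheb j))"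
        unfolding monom_cheb smult_sum_right by (simp add: mult.commute)
      also have "\<dots> = (\<Sum>j\<le>d. smult (Dc j l * coeff p l) (cheb j))"
      proof (rule sum.mono_neutral_left)
        show "\<forall>i\<in>{..d} - {..l}. smult (Dc i l * coeff p l) (cheb i) = 0" by (simp add: Dc_gt)
      qed (use l in auto)
      finally show "smult (coeff p l) (monom 1 l) = \<dots>" .
    qed
    also have "\<dots> = (\<Sum>j\<le>d. \<Sum>l\<le>d. smult (Dc j l * coeff p l) (cheb j))" by (rule sum.swap)
    also have "\<dots> = (\<Sum>j\<le>d. smult (c j) (cheb j))"
      unfolding c_def b_eq by (simp add: smult_sum)
    finally show ?thesis .
  qed
  have "cheb_coeffs p = c"
    by (rule cheb_coeffs_eq) (use rep deg in \<open>auto simp: c_def\<close>)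
  then show ?thesis
    unfolding cheb_norm_def deg atLeast0AtMost b_def[symmetric] by (simp add: c_def)
qed

end
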